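(* Let $\mathcal{P}$ be a filtered meet-semilattice and $F\colon\mathcal{P}\to\mathrm{SSets}$ a weak Mackey functor with a quasi-unit. Then $F$ is cofibrant, i.e. the natural map of simplicial sets $\operatorname{colim}_{\mathcal{P}_{<i}}F\to F(i)$ is (degreewise) injective for every $i\in\mathcal{P}$.
   Context: A filtered meet-semilattice is a poset in which any two elements $j,k$ have a meet $j\wedge k$, equipped with $d\colon\mathcal{P}\to\mathbb{N}$ with $d(i)<d(j)$ whenever $i<j$. (Cofibrant refers to the Reedy model structure on $\operatorname{Fun}(\mathcal{P},\mathrm{SSets})$, in which a functor is cofibrant exactly when these natural maps are injective.) $F(j<i)$ is the image of the arrow $j\to i$; $F(i<i)$ and $G(i<i)$ are identities. A weak Mackey functor $F\colon\mathcal{P}\to\mathrm{SSets}$ is a covariant functor with maps $G(j<i)\colon F(i)\to F(j)$ for $j<i$ such that for all $j<i,k<i$ there are $\alpha(i,j,k)\in\operatorname{End}(F(j))$, $\beta(i,j,k)\in\operatorname{End}(F(k\wedge j))$ with $G(j<i)\circ F(k<i)=\alpha(i,j,k)\circ F(k\wedge j<j)\circ G(k\wedge j<k)=F(k\wedge j<j)\circ\beta(i,j,k)\circ G(k\wedge j<k)$; it has a quasi-unit if $\alpha(i,j,j)$ is an automorphism of $F(j)$ for all $j<i$. *)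

theory Defs
  imports Main
begin

record 'a sset =
  sx :: "nat \<Rightarrow> 'a set"
  sd :: "nat \<Rightarrow> nat \<Rightarrow> 'a \<Rightarrow> 'a"
  ss :: "nat \<Rightarrow> nat \<Rightarrow> 'a \<Rightarrow> 'a"

definition is_sset :: "'a sset \<Rightarrow> bool" where
  "is_sset X \<longleftrightarrow>
     (\<forall>n i x. x \<in> sx X (Suc n) \<longrightarrow> i \<le> Suc n \<longrightarrow> sd X n i x \<in> sx X n) \<and>
     (\<forall>n i x. x \<in> sx X n \<longrightarrow> i \<le> n \<longrightarrow> ss X n i x \<in> sx X (Suc n)) \<and>
     (\<forall>n i j x. x \<in> sx X (Suc (Suc n)) \<longrightarrow> i < j \<longrightarrow> j \<le> Suc (Suc n) \<longrightarrow>
        sd X n i (sd X (Suc n) j x) = sd X n (j - 1) (sd X (Suc n) i x)) \<and>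
     (\<forall>n i j x. x \<in> sx X n \<longrightarrow> j \<le> n \<longrightarrow> (i = j \<or> i = Suc j) \<longrightarrow>
        sd X n i (ss X n j x) = x) \<and>
     (\<forall>m i j x. x \<in> sx X (Suc m) \<longrightarrow> i < j \<longrightarrow> j \<le> Suc m \<longrightarrow>
        sd X (Suc m) i (ss X (Suc m) j x) = ss X m (j - 1) (sd X m i x)) \<and>
     (\<forall>m i j x. x \<in> sx X (Suc m) \<longrightarrow> Suc j < i \<longrightarrow> i \<le> Suc (Suc m) \<longrightarrow>
        sd X (Suc m) i (ss X (Suc m) j x) = ss X m j (sd X m (i - 1) x)) \<and>
     (\<forall>n i j x. x \<in> sx X n \<longrightarrow> i \<le> j \<longrightarrow> j \<le> n \<longrightarrow>
        ss X (Suc n) i (ss X n j x) = ss X (Suc n) (Suc j) (ss X n i x))"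

definition is_smap :: "'a sset \<Rightarrow> 'b sset \<Rightarrow> (nat \<Rightarrow> 'a \<Rightarrow> 'b) \<Rightarrow> bool" where
  "is_smap X Y f \<longleftrightarrow>
     (\<forall>n x. x \<in> sx X n \<longrightarrow> f n x \<in> sx Y n) \<and>
     (\<forall>n i x. x \<in> sx X (Suc n) \<longrightarrow> i \<le> Suc n \<longrightarrow> f n (sd X n i x) = sd Y n i (f (Suc n) x)) \<and>
     (\<forall>n i x. x \<in> sx X n \<longrightarrow> i \<le> n \<longrightarrow> f (Suc n) (ss X n i x) = ss Y n i (f n x))"

definition is_send :: "'a sset \<Rightarrow> (nat \<Rightarrow> 'a \<Rightarrow> 'a) \<Rightarrow> bool" where
  "is_send X f \<longleftrightarrow> is_smap X X f"

definition is_saut :: "'a sset \<Rightarrow> (nat \<Rightarrow> 'a \<Rightarrow> 'a) \<Rightarrow> bool" where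
  "is_saut X f \<longleftrightarrow> is_smap X X f \<and>
     (\<exists>g. is_smap X X g \<and> (\<forall>n x. x \<in> sx X n \<longrightarrow> g n (f n x) = x \<and> f n (g n x) = x))"

definition filtration :: "('p::semilattice_inf \<Rightarrow> nat) \<Rightarrow> bool" where
  "filtration d \<longleftrightarrow> (\<forall>i j::'p. i < j \<longrightarrow> d i < d j)"

text \<open>F i is the simplicial set at i; Fm j i n is the level-n component of F(j<=i).\<close>
definition is_sfunctor ::
  "('p::order \<Rightarrow> 'a sset) \<Rightarrow> ('p \<Rightarrow> 'p \<Rightarrow> nat \<Rightarrow> 'a \<Rightarrow> 'a) \<Rightarrow> bool" where
  "is_sfunctor F Fm \<longleftrightarrow>
     (\<forall>i. is_sset (F i)) \<and>
     (\<forall>j i. j \<le> i \<longrightarrow> is_smap (F j) (F i) (Fm j i)) \<and>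
     (\<forall>i n x. x \<in> sx (F i) n \<longrightarrow> Fm i i n x = x) \<and>
     (\<forall>j k l n x. j \<le> k \<longrightarrow> k \<le> l \<longrightarrow> x \<in> sx (F j) n \<longrightarrow>
        Fm k l n (Fm j k n x) = Fm j l n x)"

text \<open>Transfer maps G(j<i) : F(i) -> F(j), extended by G(i<i) = id.\<close>
definition Gx :: "('p \<Rightarrow> 'p \<Rightarrow> nat \<Rightarrow> 'a \<Rightarrow> 'a) \<Rightarrow> 'p \<Rightarrow> 'p \<Rightarrow> nat \<Rightarrow> 'a \<Rightarrow> 'a" where
  "Gx G j i n x = (if j = i then x else G j i n x)"

definition weak_mackey ::
  "('p::semilattice_inf \<Rightarrow> 'a sset) \<Rightarrow> ('p \<Rightarrow> 'p \<Rightarrow> nat \<Rightarrow> 'a \<Rightarrow> 'a) \<Rightarrow>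
   ('p \<Rightarrow> 'p \<Rightarrow> nat \<Rightarrow> 'a \<Rightarrow> 'a) \<Rightarrow>
   ('p \<Rightarrow> 'p \<Rightarrow> 'p \<Rightarrow> nat \<Rightarrow> 'a \<Rightarrow> 'a) \<Rightarrow> ('p \<Rightarrow> 'p \<Rightarrow> 'p \<Rightarrow> nat \<Rightarrow> 'a \<Rightarrow> 'a) \<Rightarrow> bool" where
  "weak_mackey F Fm G \<alpha> \<beta> \<longleftrightarrow>
     is_sfunctor F Fm \<and>
     (\<forall>j i. j < i \<longrightarrow> is_smap (F i) (F j) (G j i)) \<and>
     (\<forall>i j k. j < i \<longrightarrow> k < i \<longrightarrow>
        is_send (F j) (\<alpha> i j k) \<and> is_send (F (inf k j)) (\<beta> i j k) \<and>
        (\<forall>n x. x \<in> sx (F k) n \<longrightarrow>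
           Gx G j i n (Fm k i n x) = \<alpha> i j k n (Fm (inf k j) j n (Gx G (inf k j) k n x)) \<and>
           Gx G j i n (Fm k i n x) = Fm (inf k j) j n (\<beta> i j k n (Gx G (inf k j) k n x))))"

definition quasi_unit ::
  "('p::order \<Rightarrow> 'a sset) \<Rightarrow> ('p \<Rightarrow> 'p \<Rightarrow> 'p \<Rightarrow> nat \<Rightarrow> 'a \<Rightarrow> 'a) \<Rightarrow> bool" where
  "quasi_unit F \<alpha> \<longleftrightarrow> (\<forall>i j. j < i \<longrightarrow> is_saut (F j) (\<alpha> i j j))"

text \<open>The colimit of F over P_{<i} is computed levelwise; in level n it is the quotient of
  the disjoint union of the sets F(j)_n (j < i) by the equivalence relation generated by
  (j,x) ~ (l, F(j<=l) x) for j <= l < i.\<close>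

definition latch_dom :: "('p::order \<Rightarrow> 'a sset) \<Rightarrow> 'p \<Rightarrow> nat \<Rightarrow> ('p \<times> 'a) set" where
  "latch_dom F i n = {(j, x). j < i \<and> x \<in> sx (F j) n}"

definition latch_step ::
  "('p::order \<Rightarrow> 'a sset) \<Rightarrow> ('p \<Rightarrow> 'p \<Rightarrow> nat \<Rightarrow> 'a \<Rightarrow> 'a) \<Rightarrow> 'p \<Rightarrow> nat \<Rightarrow>
   ('p \<times> 'a) \<Rightarrow> ('p \<times> 'a) \<Rightarrow> bool" where
  "latch_step F Fm i n a b \<longleftrightarrow>
     (\<exists>j l x. a = (j, x) \<and> b = (l, Fm j l n x) \<and> j \<le> l \<and> l < i \<and> x \<in> sx (F j) n)"

definition latch_rel ::
  "('p::order \<Rightarrow> 'a sset) \<Rightarrow> ('p \<Rightarrow> 'p \<Rightarrow> nat \<Rightarrow> 'a \<Rightarrow> 'a) \<Rightarrow> 'p \<Rightarrow> nat \<Rightarrow> ('p \<times> 'a) rel" where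
  "latch_rel F Fm i n = {(a, b). equivclp (latch_step F Fm i n) a b}"

definition latch_obj ::
  "('p::order \<Rightarrow> 'a sset) \<Rightarrow> ('p \<Rightarrow> 'p \<Rightarrow> nat \<Rightarrow> 'a \<Rightarrow> 'a) \<Rightarrow> 'p \<Rightarrow> nat \<Rightarrow> ('p \<times> 'a) set set" where
  "latch_obj F Fm i n = latch_dom F i n // latch_rel F Fm i n"

definition latch_map ::
  "('p::order \<Rightarrow> 'p \<Rightarrow> nat \<Rightarrow> 'a \<Rightarrow> 'a) \<Rightarrow> 'p \<Rightarrow> nat \<Rightarrow> ('p \<times> 'a) set \<Rightarrow> 'a" where
  "latch_map Fm i n C = (THE y. \<exists>(j, x) \<in> C. y = Fm j i n x)"

definition reedy_cofibrant ::
  "('p::order \<Rightarrow> 'a sset) \<Rightarrow> ('p \<Rightarrow> 'p \<Rightarrow> nat \<Rightarrow> 'a \<Rightarrow> 'a) \<Rightarrow> bool" where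
  "reedy_cofibrant F Fm \<longleftrightarrow> (\<forall>i n. inj_on (latch_map Fm i n) (latch_obj F Fm i n))"

end

theory Submission
  imports Defs
begin

lemma wm_facts:
  assumes "weak_mackey F Fm G \<alpha> \<beta>"
  shows "is_sfunctor F Fm"
    and "\<And>j i. j < i \<Longrightarrow> is_smap (F i) (F j) (G j i)"
    and "\<And>i j k n x. j < i \<Longrightarrow> k < i \<Longrightarrow> x \<in> sx (F k) n \<Longrightarrow>
           Gx G j i n (Fm k i n x) = \<alpha> i j k n (Fm (inf k j) j n (Gx G (inf k j) k n x))"
  using assms unfolding weak_mackey_def by blast+

lemma sf_facts:
  assumes "is_sfunctor F Fm"
  shows "\<And>j i n x. j \<le> i \<Longrightarrow> x \<in> sx (F j) n \<Longrightarrow> Fm j i n x \<in> sx (F i) n"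
    and "\<And>i n x. x \<in> sx (F i) n \<Longrightarrow> Fm i i n x = x"
    and "\<And>j k l n x. j \<le> k \<Longrightarrow> k \<le> l \<Longrightarrow> x \<in> sx (F j) n \<Longrightarrow>
        Fm k l n (Fm j k n x) = Fm j l n x"
  using assms unfolding is_sfunctor_def is_smap_def by blast+

lemma alpha_self:
  assumes wm: "weak_mackey F Fm G \<alpha> \<beta>" and ji: "(j::'p::semilattice_inf) < i"
    and x: "x \<in> sx (F j) n"
  shows "Gx G j i n (Fm j i n x) = \<alpha> i j j n x"
proof -
  have sf: "is_sfunctor F Fm" using wm_facts(1)[OF wm] .
  have "Gx G j i n (Fm j i n x) = \<alpha> i j j n (Fm (inf j j) j n (Gx G (inf j j) j n x))"
    using wm_facts(3)[OF wm ji ji x] .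
  also have "\<dots> = \<alpha> i j j n x" using sf_facts(2)[OF sf x] by (simp add: Gx_def)
  finally show ?thesis .
qed

lemma saut_inj:
  assumes "is_saut X f" "x \<in> sx X n" "y \<in> sx X n" "f n x = f n y"
  shows "x = y"
  using assms unfolding is_saut_def by metis

lemma Fm_inj:
  assumes wm: "weak_mackey F Fm G \<alpha> \<beta>" and qu: "quasi_unit F \<alpha>"
    and ji: "(j::'p::semilattice_inf) < i"
    and x: "x \<in> sx (F j) n" and x': "x' \<in> sx (F j) n"
    and eq: "Fm j i n x = Fm j i n x'"
  shows "x = x'"
proof -
  have "\<alpha> i j j n x = \<alpha> i j j n x'"
    using alpha_self[OF wm ji x] alpha_self[OF wm ji x'] eq by simp
  moreover have "is_saut (F j) (\<alpha> i j j)" using qu ji unfolding quasi_unit_def by blast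
  ultimately show ?thesis using saut_inj x x' by metis
qed

lemma key:
  assumes wm: "weak_mackey F Fm G \<alpha> \<beta>" and qu: "quasi_unit F \<alpha>"
    and ji: "(j::'p::semilattice_inf) < i" and ki: "k < i"
    and x: "x \<in> sx (F j) n" and y: "y \<in> sx (F k) n"
    and eq: "Fm j i n x = Fm k i n y"
  shows "\<exists>w \<in> sx (F (inf k j)) n. x = Fm (inf k j) j n w"
proof -
  have sf: "is_sfunctor F Fm" using wm_facts(1)[OF wm] .
  define m where "m = inf k j"
  have mj: "m \<le> j" and mk: "m \<le> k" unfolding m_def by auto
  show ?thesis
  proof (cases "m = j")
    case True
    then show ?thesis using x sf_facts(2)[OF sf x] unfolding m_def by metis
  next
    case False
    hence mj': "m < j" using mj by simp
    show ?thesis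
    proof (cases "m = k")
      case True
      have "Fm j i n x = Fm j i n (Fm k j n y)"
        using eq sf_facts(3)[OF sf _ _ y, of j i] True mj ji by simp
      hence "x = Fm k j n y"
        using Fm_inj[OF wm qu ji x sf_facts(1)[OF sf _ y]] True mj by metis
      then show ?thesis using y True unfolding m_def by metis
    next
      case False
      hence mk': "m < k" using mk by simp
      have au: "is_saut (F m) (\<alpha> k m m)" using qu mk' unfolding quasi_unit_def by blast
      then obtain \<gamma> where gsm: "is_smap (F m) (F m) \<gamma>"
        and ginv: "\<And>n z. z \<in> sx (F m) n \<Longrightarrow> \<alpha> k m m n (\<gamma> n z) = z"
        unfolding is_saut_def by blast
      define u where "u = Gx G m k n y"
      have u: "u \<in> sx (F m) n" using wm_facts(2)[OF wm mk'] y mk' unfolding u_def Gx_def is_smap_def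
        by auto
      define w where "w = \<gamma> n u"
      have w: "w \<in> sx (F m) n" using gsm u unfolding w_def is_smap_def by blast
      define y' where "y' = Fm m k n w"
      have y': "y' \<in> sx (F k) n" using sf_facts(1)[OF sf mk w] unfolding y'_def .
      have "Gx G m k n y' = \<alpha> k m m n w" using alpha_self[OF wm mk' w] unfolding y'_def .
      hence gy': "Gx G m k n y' = u" using ginv[OF u] unfolding w_def by simp
      have e1: "Gx G j i n (Fm k i n y) = \<alpha> i j k n (Fm m j n u)"
        using wm_facts(3)[OF wm ji ki y] unfolding m_def u_def .
      have e2: "Gx G j i n (Fm k i n y') = \<alpha> i j k n (Fm m j n u)"
        using wm_facts(3)[OF wm ji ki y'] gy' unfolding m_def by simp
      have "Fm k i n y' = Fm m i n w" using sf_facts(3)[OF sf mk _ w] ki unfolding y'_def by simp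
      also have "\<dots> = Fm j i n (Fm m j n w)" using sf_facts(3)[OF sf mj _ w] ji by simp
      finally have e3: "Fm k i n y' = Fm j i n (Fm m j n w)" .
      have "\<alpha> i j j n x = \<alpha> i j j n (Fm m j n w)"
        using alpha_self[OF wm ji x] alpha_self[OF wm ji sf_facts(1)[OF sf mj w]] e1 e2 e3 eq
        by simp
      moreover have "is_saut (F j) (\<alpha> i j j)" using qu ji unfolding quasi_unit_def by blast
      ultimately have "x = Fm m j n w" using saut_inj x sf_facts(1)[OF sf mj w] by metis
      then show ?thesis using w unfolding m_def by blast
    qed
  qed
qed


lemma step_pres:
  assumes sf: "is_sfunctor F Fm"
    and st: "latch_step F Fm i n a b \<or> latch_step F Fm i n b a"
    and a: "a \<in> latch_dom F i n"
  shows "b \<in> latch_dom F i n \<and> Fm (fst b) i n (snd b) = Fm (fst a) i n (snd a)"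
  using st
proof
  assume "latch_step F Fm i n a b"
  then obtain j l x where "a = (j, x)" "b = (l, Fm j l n x)" "j \<le> l" "l < i" "x \<in> sx (F j) n"
    unfolding latch_step_def by blast
  then show ?thesis using sf_facts[OF sf] unfolding latch_dom_def by auto
next
  assume "latch_step F Fm i n b a"
  then obtain j l x where "b = (j, x)" "a = (l, Fm j l n x)" "j \<le> l" "l < i" "x \<in> sx (F j) n"
    unfolding latch_step_def by blast
  then show ?thesis using sf_facts[OF sf] unfolding latch_dom_def by auto
qed

lemma rel_pres:
  assumes sf: "is_sfunctor F Fm"
    and r: "equivclp (latch_step F Fm i n) a b"
    and a: "a \<in> latch_dom F i n"
  shows "b \<in> latch_dom F i n \<and> Fm (fst b) i n (snd b) = Fm (fst a) i n (snd a)"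
proof -
  have "(symclp (latch_step F Fm i n))\<^sup>*\<^sup>* a b" using r unfolding equivclp_def .
  then show ?thesis
  proof (induction rule: rtranclp_induct)
    case base
    then show ?case using a by simp
  next
    case (step b c)
    then show ?case using step_pres[OF sf, of i n b c] unfolding symclp_def by auto
  qed
qed

lemma latch_map_val:
  assumes sf: "is_sfunctor F Fm" and a: "a \<in> latch_dom F i n"
  shows "latch_map Fm i n (latch_rel F Fm i n `` {a}) = Fm (fst a) i n (snd a)"
  unfolding latch_map_def
proof (rule the_equality)
  show "\<exists>(j, x)\<in>latch_rel F Fm i n `` {a}. Fm (fst a) i n (snd a) = Fm j i n x"
    by (rule bexI[of _ a]) (auto simp: latch_rel_def)
next
  fix y assume "\<exists>(j, x)\<in>latch_rel F Fm i n `` {a}. y = Fm j i n x"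
  then obtain b where "equivclp (latch_step F Fm i n) a b" "y = Fm (fst b) i n (snd b)"
    unfolding latch_rel_def by auto
  then show "y = Fm (fst a) i n (snd a)" using rel_pres[OF sf _ a] by metis
qed

lemma same_val_rel:
  assumes wm: "weak_mackey F Fm G \<alpha> \<beta>" and qu: "quasi_unit F \<alpha>"
    and a: "(a::'p::semilattice_inf \<times> 'a) \<in> latch_dom F i n" and b: "b \<in> latch_dom F i n"
    and eq: "Fm (fst a) i n (snd a) = Fm (fst b) i n (snd b)"
  shows "equivclp (latch_step F Fm i n) a b"
proof -
  have sf: "is_sfunctor F Fm" using wm_facts(1)[OF wm] .
  obtain j x where ax: "a = (j, x)" by (cases a)
  obtain k y where by': "b = (k, y)" by (cases b)
  have ji: "j < i" and x: "x \<in> sx (F j) n" using a ax unfolding latch_dom_def by auto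
  have ki: "k < i" and y: "y \<in> sx (F k) n" using b by' unfolding latch_dom_def by auto
  have eq': "Fm j i n x = Fm k i n y" using eq ax by' by simp
  define m where "m = inf k j"
  have mj: "m \<le> j" and mk: "m \<le> k" unfolding m_def by auto
  have mi: "m < i" using mj ji by simp
  obtain w where w: "w \<in> sx (F m) n" and xw: "x = Fm m j n w"
    using key[OF wm qu ji ki x y eq'] unfolding m_def by blast
  obtain w' where w': "w' \<in> sx (F m) n" and yw: "y = Fm m k n w'"
    using key[OF wm qu ki ji y x eq'[symmetric]] unfolding m_def by (metis inf.commute)
  have "Fm m i n w = Fm m i n w'"
    using eq' xw yw sf_facts(3)[OF sf mj _ w, of i] sf_facts(3)[OF sf mk _ w', of i] ji ki by simp
  hence ww: "w = w'" using Fm_inj[OF wm qu mi w w'] by blast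
  have s1: "latch_step F Fm i n (m, w) a" unfolding latch_step_def using ax xw mj ji w by blast
  have s2: "latch_step F Fm i n (m, w) b" unfolding latch_step_def using by' yw ww mk ki w by blast
  have "equivclp (latch_step F Fm i n) a (m, w)"
    using s1 by (meson equivclp_sym r_into_equivclp)
  moreover have "equivclp (latch_step F Fm i n) (m, w) b" using s2 by (rule r_into_equivclp)
  ultimately show ?thesis by (rule equivclp_trans)
qed

theorem lemma3p8:
  fixes d :: "'p::semilattice_inf \<Rightarrow> nat"
    and F :: "'p \<Rightarrow> 'a sset"
    and Fm G :: "'p \<Rightarrow> 'p \<Rightarrow> nat \<Rightarrow> 'a \<Rightarrow> 'a"
  assumes "filtration d"
    and "\<exists>\<alpha> \<beta>. weak_mackey F Fm G \<alpha> \<beta> \<and> quasi_unit F \<alpha>"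
  shows "reedy_cofibrant F Fm"
proof -
  obtain \<alpha> \<beta> where wm: "weak_mackey F Fm G \<alpha> \<beta>" and qu: "quasi_unit F \<alpha>" using assms(2) by blast
  have sf: "is_sfunctor F Fm" using wm_facts(1)[OF wm] .
  have eqv: "equiv UNIV (latch_rel F Fm i n)" for i n
    unfolding latch_rel_def equiv_def refl_on_def sym_def trans_def
    by (auto intro: equivclp_sym equivclp_trans)
  show ?thesis unfolding reedy_cofibrant_def
  proof (intro allI inj_onI)
    fix i n C D
    assume C: "C \<in> latch_obj F Fm i n" and D: "D \<in> latch_obj F Fm i n"
      and e: "latch_map Fm i n C = latch_map Fm i n D"
    obtain a where a: "a \<in> latch_dom F i n" and Ca: "C = latch_rel F Fm i n `` {a}"
      using C unfolding latch_obj_def by (auto elim: quotientE)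
    obtain b where b: "b \<in> latch_dom F i n" and Db: "D = latch_rel F Fm i n `` {b}"
      using D unfolding latch_obj_def by (auto elim: quotientE)
    have "Fm (fst a) i n (snd a) = Fm (fst b) i n (snd b)"
      using e latch_map_val[OF sf a] latch_map_val[OF sf b] Ca Db by simp
    hence "(a, b) \<in> latch_rel F Fm i n"
      using same_val_rel[OF wm qu a b] unfolding latch_rel_def by simp
    then show "C = D" using Ca Db equiv_class_eq[OF eqv] by simp
  qed
qed

end
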